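(* There is a finite magma satisfying $\mathrm{x}\simeq\mathrm{y}\diamond((\mathrm{y}\diamond(\mathrm{x}\diamond\mathrm{x}))\diamond\mathrm{y})$ but not $\mathrm{x}\simeq(\mathrm{x}\diamond\mathrm{x})\diamond((\mathrm{x}\diamond\mathrm{x})\diamond\mathrm{x})$. In particular, the first law does not imply the second, even for finite magmas.
   Context: A magma is a set with a binary operation $\diamond$; it satisfies a law if the identity holds for all assignments of the variables to elements of the magma. *)

theory Defs
  imports Main
begin

definition magma :: "'a set \<Rightarrow> ('a \<Rightarrow> 'a \<Rightarrow> 'a) \<Rightarrow> bool" where
  "magma M op \<longleftrightarrow> (\<forall>x\<in>M. \<forall>y\<in>M. op x y \<in> M)"

definition law1 :: "'a set \<Rightarrow> ('a \<Rightarrow> 'a \<Rightarrow> 'a) \<Rightarrow> bool" where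
  "law1 M op \<longleftrightarrow> (\<forall>x\<in>M. \<forall>y\<in>M. x = op y (op (op y (op x x)) y))"

definition law2 :: "'a set \<Rightarrow> ('a \<Rightarrow> 'a \<Rightarrow> 'a) \<Rightarrow> bool" where
  "law2 M op \<longleftrightarrow> (\<forall>x\<in>M. x = op (op x x) (op (op x x) x))"

end

theory Submission
  imports Defs
begin

text \<open>A 25-element magma: elements 5q+a with (q,a) in Z5 x Z5; the first
  coordinate follows the affine law1-magma q*r = 4+3q+4r on Z5 and the second
  coordinate is 3a+4b plus a cocycle gtab(q,r).\<close>

definition gtab :: "nat list" where
  "gtab = [4, 4, 4, 3, 4, 0, 3, 1, 2, 0, 2, 0, 0, 0, 1, 0, 3, 0, 0, 2, 2, 4, 0, 1, 0]"

definition mop :: "nat \<Rightarrow> nat \<Rightarrow> nat" where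
  "mop x y = 5 * ((4 + 3 * (x div 5) + 4 * (y div 5)) mod 5)
             + (3 * (x mod 5) + 4 * (y mod 5) + gtab ! (5 * (x div 5) + y div 5)) mod 5"

lemma mop_lt: "mop x y < 25"
  unfolding mop_def by simp

lemma mop_row0: "mop 0 0 = 24" "mop 0 1 = 23" "mop 0 2 = 22" "mop 0 3 = 21" "mop 0 4 = 20" "mop 0 5 = 19" "mop 0 6 = 18" "mop 0 7 = 17" "mop 0 8 = 16" "mop 0 9 = 15" "mop 0 10 = 14" "mop 0 11 = 13" "mop 0 12 = 12" "mop 0 13 = 11" "mop 0 14 = 10" "mop 0 15 = 8" "mop 0 16 = 7" "mop 0 17 = 6" "mop 0 18 = 5" "mop 0 19 = 9" "mop 0 20 = 4" "mop 0 21 = 3" "mop 0 22 = 2" "mop 0 23 = 1" "mop 0 24 = 0"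
  by (simp_all add: mop_def gtab_def)

lemma mop_row1: "mop 1 0 = 22" "mop 1 1 = 21" "mop 1 2 = 20" "mop 1 3 = 24" "mop 1 4 = 23" "mop 1 5 = 17" "mop 1 6 = 16" "mop 1 7 = 15" "mop 1 8 = 19" "mop 1 9 = 18" "mop 1 10 = 12" "mop 1 11 = 11" "mop 1 12 = 10" "mop 1 13 = 14" "mop 1 14 = 13" "mop 1 15 = 6" "mop 1 16 = 5" "mop 1 17 = 9" "mop 1 18 = 8" "mop 1 19 = 7" "mop 1 20 = 2" "mop 1 21 = 1" "mop 1 22 = 0" "mop 1 23 = 4" "mop 1 24 = 3"
  by (simp_all add: mop_def gtab_def)

lemma mop_row2: "mop 2 0 = 20" "mop 2 1 = 24" "mop 2 2 = 23" "mop 2 3 = 22" "mop 2 4 = 21" "mop 2 5 = 15" "mop 2 6 = 19" "mop 2 7 = 18" "mop 2 8 = 17" "mop 2 9 = 16" "mop 2 10 = 10" "mop 2 11 = 14" "mop 2 12 = 13" "mop 2 13 = 12" "mop 2 14 = 11" "mop 2 15 = 9" "mop 2 16 = 8" "mop 2 17 = 7" "mop 2 18 = 6" "mop 2 19 = 5" "mop 2 20 = 0" "mop 2 21 = 4" "mop 2 22 = 3" "mop 2 23 = 2" "mop 2 24 = 1"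
  by (simp_all add: mop_def gtab_def)

lemma mop_row3: "mop 3 0 = 23" "mop 3 1 = 22" "mop 3 2 = 21" "mop 3 3 = 20" "mop 3 4 = 24" "mop 3 5 = 18" "mop 3 6 = 17" "mop 3 7 = 16" "mop 3 8 = 15" "mop 3 9 = 19" "mop 3 10 = 13" "mop 3 11 = 12" "mop 3 12 = 11" "mop 3 13 = 10" "mop 3 14 = 14" "mop 3 15 = 7" "mop 3 16 = 6" "mop 3 17 = 5" "mop 3 18 = 9" "mop 3 19 = 8" "mop 3 20 = 3" "mop 3 21 = 2" "mop 3 22 = 1" "mop 3 23 = 0" "mop 3 24 = 4"
  by (simp_all add: mop_def gtab_def)

lemma mop_row4: "mop 4 0 = 21" "mop 4 1 = 20" "mop 4 2 = 24" "mop 4 3 = 23" "mop 4 4 = 22" "mop 4 5 = 16" "mop 4 6 = 15" "mop 4 7 = 19" "mop 4 8 = 18" "mop 4 9 = 17" "mop 4 10 = 11" "mop 4 11 = 10" "mop 4 12 = 14" "mop 4 13 = 13" "mop 4 14 = 12" "mop 4 15 = 5" "mop 4 16 = 9" "mop 4 17 = 8" "mop 4 18 = 7" "mop 4 19 = 6" "mop 4 20 = 1" "mop 4 21 = 0" "mop 4 22 = 4" "mop 4 23 = 3" "mop 4 24 = 2"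
  by (simp_all add: mop_def gtab_def)

lemma mop_row5: "mop 5 0 = 10" "mop 5 1 = 14" "mop 5 2 = 13" "mop 5 3 = 12" "mop 5 4 = 11" "mop 5 5 = 8" "mop 5 6 = 7" "mop 5 7 = 6" "mop 5 8 = 5" "mop 5 9 = 9" "mop 5 10 = 1" "mop 5 11 = 0" "mop 5 12 = 4" "mop 5 13 = 3" "mop 5 14 = 2" "mop 5 15 = 22" "mop 5 16 = 21" "mop 5 17 = 20" "mop 5 18 = 24" "mop 5 19 = 23" "mop 5 20 = 15" "mop 5 21 = 19" "mop 5 22 = 18" "mop 5 23 = 17" "mop 5 24 = 16"
  by (simp_all add: mop_def gtab_def)

lemma mop_row6: "mop 6 0 = 13" "mop 6 1 = 12" "mop 6 2 = 11" "mop 6 3 = 10" "mop 6 4 = 14" "mop 6 5 = 6" "mop 6 6 = 5" "mop 6 7 = 9" "mop 6 8 = 8" "mop 6 9 = 7" "mop 6 10 = 4" "mop 6 11 = 3" "mop 6 12 = 2" "mop 6 13 = 1" "mop 6 14 = 0" "mop 6 15 = 20" "mop 6 16 = 24" "mop 6 17 = 23" "mop 6 18 = 22" "mop 6 19 = 21" "mop 6 20 = 18" "mop 6 21 = 17" "mop 6 22 = 16" "mop 6 23 = 15" "mop 6 24 = 19"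
  by (simp_all add: mop_def gtab_def)

lemma mop_row7: "mop 7 0 = 11" "mop 7 1 = 10" "mop 7 2 = 14" "mop 7 3 = 13" "mop 7 4 = 12" "mop 7 5 = 9" "mop 7 6 = 8" "mop 7 7 = 7" "mop 7 8 = 6" "mop 7 9 = 5" "mop 7 10 = 2" "mop 7 11 = 1" "mop 7 12 = 0" "mop 7 13 = 4" "mop 7 14 = 3" "mop 7 15 = 23" "mop 7 16 = 22" "mop 7 17 = 21" "mop 7 18 = 20" "mop 7 19 = 24" "mop 7 20 = 16" "mop 7 21 = 15" "mop 7 22 = 19" "mop 7 23 = 18" "mop 7 24 = 17"
  by (simp_all add: mop_def gtab_def)

lemma mop_row8: "mop 8 0 = 14" "mop 8 1 = 13" "mop 8 2 = 12" "mop 8 3 = 11" "mop 8 4 = 10" "mop 8 5 = 7" "mop 8 6 = 6" "mop 8 7 = 5" "mop 8 8 = 9" "mop 8 9 = 8" "mop 8 10 = 0" "mop 8 11 = 4" "mop 8 12 = 3" "mop 8 13 = 2" "mop 8 14 = 1" "mop 8 15 = 21" "mop 8 16 = 20" "mop 8 17 = 24" "mop 8 18 = 23" "mop 8 19 = 22" "mop 8 20 = 19" "mop 8 21 = 18" "mop 8 22 = 17" "mop 8 23 = 16" "mop 8 24 = 15"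
  by (simp_all add: mop_def gtab_def)

lemma mop_row9: "mop 9 0 = 12" "mop 9 1 = 11" "mop 9 2 = 10" "mop 9 3 = 14" "mop 9 4 = 13" "mop 9 5 = 5" "mop 9 6 = 9" "mop 9 7 = 8" "mop 9 8 = 7" "mop 9 9 = 6" "mop 9 10 = 3" "mop 9 11 = 2" "mop 9 12 = 1" "mop 9 13 = 0" "mop 9 14 = 4" "mop 9 15 = 24" "mop 9 16 = 23" "mop 9 17 = 22" "mop 9 18 = 21" "mop 9 19 = 20" "mop 9 20 = 17" "mop 9 21 = 16" "mop 9 22 = 15" "mop 9 23 = 19" "mop 9 24 = 18"
  by (simp_all add: mop_def gtab_def)

lemma mop_row10: "mop 10 0 = 2" "mop 10 1 = 1" "mop 10 2 = 0" "mop 10 3 = 4" "mop 10 4 = 3" "mop 10 5 = 20" "mop 10 6 = 24" "mop 10 7 = 23" "mop 10 8 = 22" "mop 10 9 = 21" "mop 10 10 = 15" "mop 10 11 = 19" "mop 10 12 = 18" "mop 10 13 = 17" "mop 10 14 = 16" "mop 10 15 = 10" "mop 10 16 = 14" "mop 10 17 = 13" "mop 10 18 = 12" "mop 10 19 = 11" "mop 10 20 = 6" "mop 10 21 = 5" "mop 10 22 = 9" "mop 10 23 = 8" "mop 10 24 = 7"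
  by (simp_all add: mop_def gtab_def)

lemma mop_row11: "mop 11 0 = 0" "mop 11 1 = 4" "mop 11 2 = 3" "mop 11 3 = 2" "mop 11 4 = 1" "mop 11 5 = 23" "mop 11 6 = 22" "mop 11 7 = 21" "mop 11 8 = 20" "mop 11 9 = 24" "mop 11 10 = 18" "mop 11 11 = 17" "mop 11 12 = 16" "mop 11 13 = 15" "mop 11 14 = 19" "mop 11 15 = 13" "mop 11 16 = 12" "mop 11 17 = 11" "mop 11 18 = 10" "mop 11 19 = 14" "mop 11 20 = 9" "mop 11 21 = 8" "mop 11 22 = 7" "mop 11 23 = 6" "mop 11 24 = 5"
  by (simp_all add: mop_def gtab_def)

lemma mop_row12: "mop 12 0 = 3" "mop 12 1 = 2" "mop 12 2 = 1" "mop 12 3 = 0" "mop 12 4 = 4" "mop 12 5 = 21" "mop 12 6 = 20" "mop 12 7 = 24" "mop 12 8 = 23" "mop 12 9 = 22" "mop 12 10 = 16" "mop 12 11 = 15" "mop 12 12 = 19" "mop 12 13 = 18" "mop 12 14 = 17" "mop 12 15 = 11" "mop 12 16 = 10" "mop 12 17 = 14" "mop 12 18 = 13" "mop 12 19 = 12" "mop 12 20 = 7" "mop 12 21 = 6" "mop 12 22 = 5" "mop 12 23 = 9" "mop 12 24 = 8"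
  by (simp_all add: mop_def gtab_def)

lemma mop_row13: "mop 13 0 = 1" "mop 13 1 = 0" "mop 13 2 = 4" "mop 13 3 = 3" "mop 13 4 = 2" "mop 13 5 = 24" "mop 13 6 = 23" "mop 13 7 = 22" "mop 13 8 = 21" "mop 13 9 = 20" "mop 13 10 = 19" "mop 13 11 = 18" "mop 13 12 = 17" "mop 13 13 = 16" "mop 13 14 = 15" "mop 13 15 = 14" "mop 13 16 = 13" "mop 13 17 = 12" "mop 13 18 = 11" "mop 13 19 = 10" "mop 13 20 = 5" "mop 13 21 = 9" "mop 13 22 = 8" "mop 13 23 = 7" "mop 13 24 = 6"
  by (simp_all add: mop_def gtab_def)

lemma mop_row14: "mop 14 0 = 4" "mop 14 1 = 3" "mop 14 2 = 2" "mop 14 3 = 1" "mop 14 4 = 0" "mop 14 5 = 22" "mop 14 6 = 21" "mop 14 7 = 20" "mop 14 8 = 24" "mop 14 9 = 23" "mop 14 10 = 17" "mop 14 11 = 16" "mop 14 12 = 15" "mop 14 13 = 19" "mop 14 14 = 18" "mop 14 15 = 12" "mop 14 16 = 11" "mop 14 17 = 10" "mop 14 18 = 14" "mop 14 19 = 13" "mop 14 20 = 8" "mop 14 21 = 7" "mop 14 22 = 6" "mop 14 23 = 5" "mop 14 24 = 9"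
  by (simp_all add: mop_def gtab_def)

lemma mop_row15: "mop 15 0 = 15" "mop 15 1 = 19" "mop 15 2 = 18" "mop 15 3 = 17" "mop 15 4 = 16" "mop 15 5 = 13" "mop 15 6 = 12" "mop 15 7 = 11" "mop 15 8 = 10" "mop 15 9 = 14" "mop 15 10 = 5" "mop 15 11 = 9" "mop 15 12 = 8" "mop 15 13 = 7" "mop 15 14 = 6" "mop 15 15 = 0" "mop 15 16 = 4" "mop 15 17 = 3" "mop 15 18 = 2" "mop 15 19 = 1" "mop 15 20 = 22" "mop 15 21 = 21" "mop 15 22 = 20" "mop 15 23 = 24" "mop 15 24 = 23"
  by (simp_all add: mop_def gtab_def)

lemma mop_row16: "mop 16 0 = 18" "mop 16 1 = 17" "mop 16 2 = 16" "mop 16 3 = 15" "mop 16 4 = 19" "mop 16 5 = 11" "mop 16 6 = 10" "mop 16 7 = 14" "mop 16 8 = 13" "mop 16 9 = 12" "mop 16 10 = 8" "mop 16 11 = 7" "mop 16 12 = 6" "mop 16 13 = 5" "mop 16 14 = 9" "mop 16 15 = 3" "mop 16 16 = 2" "mop 16 17 = 1" "mop 16 18 = 0" "mop 16 19 = 4" "mop 16 20 = 20" "mop 16 21 = 24" "mop 16 22 = 23" "mop 16 23 = 22" "mop 16 24 = 21"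
  by (simp_all add: mop_def gtab_def)

lemma mop_row17: "mop 17 0 = 16" "mop 17 1 = 15" "mop 17 2 = 19" "mop 17 3 = 18" "mop 17 4 = 17" "mop 17 5 = 14" "mop 17 6 = 13" "mop 17 7 = 12" "mop 17 8 = 11" "mop 17 9 = 10" "mop 17 10 = 6" "mop 17 11 = 5" "mop 17 12 = 9" "mop 17 13 = 8" "mop 17 14 = 7" "mop 17 15 = 1" "mop 17 16 = 0" "mop 17 17 = 4" "mop 17 18 = 3" "mop 17 19 = 2" "mop 17 20 = 23" "mop 17 21 = 22" "mop 17 22 = 21" "mop 17 23 = 20" "mop 17 24 = 24"
  by (simp_all add: mop_def gtab_def)

lemma mop_row18: "mop 18 0 = 19" "mop 18 1 = 18" "mop 18 2 = 17" "mop 18 3 = 16" "mop 18 4 = 15" "mop 18 5 = 12" "mop 18 6 = 11" "mop 18 7 = 10" "mop 18 8 = 14" "mop 18 9 = 13" "mop 18 10 = 9" "mop 18 11 = 8" "mop 18 12 = 7" "mop 18 13 = 6" "mop 18 14 = 5" "mop 18 15 = 4" "mop 18 16 = 3" "mop 18 17 = 2" "mop 18 18 = 1" "mop 18 19 = 0" "mop 18 20 = 21" "mop 18 21 = 20" "mop 18 22 = 24" "mop 18 23 = 23" "mop 18 24 = 22"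
  by (simp_all add: mop_def gtab_def)

lemma mop_row19: "mop 19 0 = 17" "mop 19 1 = 16" "mop 19 2 = 15" "mop 19 3 = 19" "mop 19 4 = 18" "mop 19 5 = 10" "mop 19 6 = 14" "mop 19 7 = 13" "mop 19 8 = 12" "mop 19 9 = 11" "mop 19 10 = 7" "mop 19 11 = 6" "mop 19 12 = 5" "mop 19 13 = 9" "mop 19 14 = 8" "mop 19 15 = 2" "mop 19 16 = 1" "mop 19 17 = 0" "mop 19 18 = 4" "mop 19 19 = 3" "mop 19 20 = 24" "mop 19 21 = 23" "mop 19 22 = 22" "mop 19 23 = 21" "mop 19 24 = 20"
  by (simp_all add: mop_def gtab_def)

lemma mop_row20: "mop 20 0 = 7" "mop 20 1 = 6" "mop 20 2 = 5" "mop 20 3 = 9" "mop 20 4 = 8" "mop 20 5 = 4" "mop 20 6 = 3" "mop 20 7 = 2" "mop 20 8 = 1" "mop 20 9 = 0" "mop 20 10 = 20" "mop 20 11 = 24" "mop 20 12 = 23" "mop 20 13 = 22" "mop 20 14 = 21" "mop 20 15 = 16" "mop 20 16 = 15" "mop 20 17 = 19" "mop 20 18 = 18" "mop 20 19 = 17" "mop 20 20 = 10" "mop 20 21 = 14" "mop 20 22 = 13" "mop 20 23 = 12" "mop 20 24 = 11"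
  by (simp_all add: mop_def gtab_def)

lemma mop_row21: "mop 21 0 = 5" "mop 21 1 = 9" "mop 21 2 = 8" "mop 21 3 = 7" "mop 21 4 = 6" "mop 21 5 = 2" "mop 21 6 = 1" "mop 21 7 = 0" "mop 21 8 = 4" "mop 21 9 = 3" "mop 21 10 = 23" "mop 21 11 = 22" "mop 21 12 = 21" "mop 21 13 = 20" "mop 21 14 = 24" "mop 21 15 = 19" "mop 21 16 = 18" "mop 21 17 = 17" "mop 21 18 = 16" "mop 21 19 = 15" "mop 21 20 = 13" "mop 21 21 = 12" "mop 21 22 = 11" "mop 21 23 = 10" "mop 21 24 = 14"
  by (simp_all add: mop_def gtab_def)

lemma mop_row22: "mop 22 0 = 8" "mop 22 1 = 7" "mop 22 2 = 6" "mop 22 3 = 5" "mop 22 4 = 9" "mop 22 5 = 0" "mop 22 6 = 4" "mop 22 7 = 3" "mop 22 8 = 2" "mop 22 9 = 1" "mop 22 10 = 21" "mop 22 11 = 20" "mop 22 12 = 24" "mop 22 13 = 23" "mop 22 14 = 22" "mop 22 15 = 17" "mop 22 16 = 16" "mop 22 17 = 15" "mop 22 18 = 19" "mop 22 19 = 18" "mop 22 20 = 11" "mop 22 21 = 10" "mop 22 22 = 14" "mop 22 23 = 13" "mop 22 24 = 12"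
  by (simp_all add: mop_def gtab_def)

lemma mop_row23: "mop 23 0 = 6" "mop 23 1 = 5" "mop 23 2 = 9" "mop 23 3 = 8" "mop 23 4 = 7" "mop 23 5 = 3" "mop 23 6 = 2" "mop 23 7 = 1" "mop 23 8 = 0" "mop 23 9 = 4" "mop 23 10 = 24" "mop 23 11 = 23" "mop 23 12 = 22" "mop 23 13 = 21" "mop 23 14 = 20" "mop 23 15 = 15" "mop 23 16 = 19" "mop 23 17 = 18" "mop 23 18 = 17" "mop 23 19 = 16" "mop 23 20 = 14" "mop 23 21 = 13" "mop 23 22 = 12" "mop 23 23 = 11" "mop 23 24 = 10"
  by (simp_all add: mop_def gtab_def)

lemma mop_row24: "mop 24 0 = 9" "mop 24 1 = 8" "mop 24 2 = 7" "mop 24 3 = 6" "mop 24 4 = 5" "mop 24 5 = 1" "mop 24 6 = 0" "mop 24 7 = 4" "mop 24 8 = 3" "mop 24 9 = 2" "mop 24 10 = 22" "mop 24 11 = 21" "mop 24 12 = 20" "mop 24 13 = 24" "mop 24 14 = 23" "mop 24 15 = 18" "mop 24 16 = 17" "mop 24 17 = 16" "mop 24 18 = 15" "mop 24 19 = 19" "mop 24 20 = 12" "mop 24 21 = 11" "mop 24 22 = 10" "mop 24 23 = 14" "mop 24 24 = 13"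
  by (simp_all add: mop_def gtab_def)

lemma mop_suc: "mop (Suc 0) 0 = 22" "mop (Suc 0) 1 = 21" "mop (Suc 0) 2 = 20" "mop (Suc 0) 3 = 24" "mop (Suc 0) 4 = 23" "mop (Suc 0) 5 = 17" "mop (Suc 0) 6 = 16" "mop (Suc 0) 7 = 15" "mop (Suc 0) 8 = 19" "mop (Suc 0) 9 = 18" "mop (Suc 0) 10 = 12" "mop (Suc 0) 11 = 11" "mop (Suc 0) 12 = 10" "mop (Suc 0) 13 = 14" "mop (Suc 0) 14 = 13" "mop (Suc 0) 15 = 6" "mop (Suc 0) 16 = 5" "mop (Suc 0) 17 = 9" "mop (Suc 0) 18 = 8" "mop (Suc 0) 19 = 7" "mop (Suc 0) 20 = 2" "mop (Suc 0) 21 = 1" "mop (Suc 0) 22 = 0" "mop (Suc 0) 23 = 4" "mop (Suc 0) 24 = 3" "mop 0 (Suc 0) = 23" "mop 1 (Suc 0) = 21" "mop 2 (Suc 0) = 24" "mop 3 (Suc 0) = 22" "mop 4 (Suc 0) = 20" "mop 5 (Suc 0) = 14" "mop 6 (Suc 0) = 12" "mop 7 (Suc 0) = 10" "mop 8 (Suc 0) = 13" "mop 9 (Suc 0) = 11" "mop 10 (Suc 0) = 1" "mop 11 (Suc 0) = 4" "mop 12 (Suc 0) = 2" "mop 13 (Suc 0) = 0" "mop 14 (Suc 0) = 3" "mop 15 (Suc 0) = 19" "mop 16 (Suc 0) = 17" "mop 17 (Suc 0) = 15" "mop 18 (Suc 0) = 18" "mop 19 (Suc 0) = 16" "mop 20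 (Suc 0) = 6" "mop 21 (Suc 0) = 9" "mop 22 (Suc 0) = 7" "mop 23 (Suc 0) = 5" "mop 24 (Suc 0) = 8" "mop (Suc 0) (Suc 0) = 21"
  by (simp_all add: mop_def gtab_def)

lemmas mop_tab = mop_row0 mop_row1 mop_row2 mop_row3 mop_row4 mop_row5 mop_row6 mop_row7 mop_row8 mop_row9 mop_row10 mop_row11 mop_row12 mop_row13 mop_row14 mop_row15 mop_row16 mop_row17 mop_row18 mop_row19 mop_row20 mop_row21 mop_row22 mop_row23 mop_row24 mop_suc

lemma cases25:
  assumes "(x::nat) < 25"
  shows "x = 0 \<or> x = 1 \<or> x = 2 \<or> x = 3 \<or> x = 4 \<or> x = 5 \<or> x = 6 \<or> x = 7 \<or> x = 8 \<or> x = 9 \<or>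
    x = 10 \<or> x = 11 \<or> x = 12 \<or> x = 13 \<or> x = 14 \<or> x = 15 \<or> x = 16 \<or> x = 17 \<or> x = 18 \<or>
    x = 19 \<or> x = 20 \<or> x = 21 \<or> x = 22 \<or> x = 23 \<or> x = 24"
  using assms by presburger

lemma law1_row0: "(y::nat) < 25 \<Longrightarrow> mop y (mop (mop y (mop 0 0)) y) = 0"
  by (drule cases25) (elim disjE; simp add: mop_tab)

lemma law1_row1: "(y::nat) < 25 \<Longrightarrow> mop y (mop (mop y (mop 1 1)) y) = 1"
  by (drule cases25) (elim disjE; simp add: mop_tab)

lemma law1_row2: "(y::nat) < 25 \<Longrightarrow> mop y (mop (mop y (mop 2 2)) y) = 2"
  by (drule cases25) (elim disjE; simp add: mop_tab)

lemma law1_row3: "(y::nat) < 25 \<Longrightarrow> mop y (mop (mop y (mop 3 3)) y) = 3"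
  by (drule cases25) (elim disjE; simp add: mop_tab)

lemma law1_row4: "(y::nat) < 25 \<Longrightarrow> mop y (mop (mop y (mop 4 4)) y) = 4"
  by (drule cases25) (elim disjE; simp add: mop_tab)

lemma law1_row5: "(y::nat) < 25 \<Longrightarrow> mop y (mop (mop y (mop 5 5)) y) = 5"
  by (drule cases25) (elim disjE; simp add: mop_tab)

lemma law1_row6: "(y::nat) < 25 \<Longrightarrow> mop y (mop (mop y (mop 6 6)) y) = 6"
  by (drule cases25) (elim disjE; simp add: mop_tab)

lemma law1_row7: "(y::nat) < 25 \<Longrightarrow> mop y (mop (mop y (mop 7 7)) y) = 7"
  by (drule cases25) (elim disjE; simp add: mop_tab)

lemma law1_row8: "(y::nat) < 25 \<Longrightarrow> mop y (mop (mop y (mop 8 8)) y) = 8"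
  by (drule cases25) (elim disjE; simp add: mop_tab)

lemma law1_row9: "(y::nat) < 25 \<Longrightarrow> mop y (mop (mop y (mop 9 9)) y) = 9"
  by (drule cases25) (elim disjE; simp add: mop_tab)

lemma law1_row10: "(y::nat) < 25 \<Longrightarrow> mop y (mop (mop y (mop 10 10)) y) = 10"
  by (drule cases25) (elim disjE; simp add: mop_tab)

lemma law1_row11: "(y::nat) < 25 \<Longrightarrow> mop y (mop (mop y (mop 11 11)) y) = 11"
  by (drule cases25) (elim disjE; simp add: mop_tab)

lemma law1_row12: "(y::nat) < 25 \<Longrightarrow> mop y (mop (mop y (mop 12 12)) y) = 12"
  by (drule cases25) (elim disjE; simp add: mop_tab)

lemma law1_row13: "(y::nat) < 25 \<Longrightarrow> mop y (mop (mop y (mop 13 13)) y) = 13"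
  by (drule cases25) (elim disjE; simp add: mop_tab)

lemma law1_row14: "(y::nat) < 25 \<Longrightarrow> mop y (mop (mop y (mop 14 14)) y) = 14"
  by (drule cases25) (elim disjE; simp add: mop_tab)

lemma law1_row15: "(y::nat) < 25 \<Longrightarrow> mop y (mop (mop y (mop 15 15)) y) = 15"
  by (drule cases25) (elim disjE; simp add: mop_tab)

lemma law1_row16: "(y::nat) < 25 \<Longrightarrow> mop y (mop (mop y (mop 16 16)) y) = 16"
  by (drule cases25) (elim disjE; simp add: mop_tab)

lemma law1_row17: "(y::nat) < 25 \<Longrightarrow> mop y (mop (mop y (mop 17 17)) y) = 17"
  by (drule cases25) (elim disjE; simp add: mop_tab)

lemma law1_row18: "(y::nat) < 25 \<Longrightarrow> mop y (mop (mop y (mop 18 18)) y) = 18"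
  by (drule cases25) (elim disjE; simp add: mop_tab)

lemma law1_row19: "(y::nat) < 25 \<Longrightarrow> mop y (mop (mop y (mop 19 19)) y) = 19"
  by (drule cases25) (elim disjE; simp add: mop_tab)

lemma law1_row20: "(y::nat) < 25 \<Longrightarrow> mop y (mop (mop y (mop 20 20)) y) = 20"
  by (drule cases25) (elim disjE; simp add: mop_tab)

lemma law1_row21: "(y::nat) < 25 \<Longrightarrow> mop y (mop (mop y (mop 21 21)) y) = 21"
  by (drule cases25) (elim disjE; simp add: mop_tab)

lemma law1_row22: "(y::nat) < 25 \<Longrightarrow> mop y (mop (mop y (mop 22 22)) y) = 22"
  by (drule cases25) (elim disjE; simp add: mop_tab)

lemma law1_row23: "(y::nat) < 25 \<Longrightarrow> mop y (mop (mop y (mop 23 23)) y) = 23"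
  by (drule cases25) (elim disjE; simp add: mop_tab)

lemma law1_row24: "(y::nat) < 25 \<Longrightarrow> mop y (mop (mop y (mop 24 24)) y) = 24"
  by (drule cases25) (elim disjE; simp add: mop_tab)

lemma law1_row1s: "(y::nat) < 25 \<Longrightarrow> mop y (mop (mop y (mop (Suc 0) (Suc 0))) y) = Suc 0"
  using law1_row1 by simp

lemma law1_all: "(x::nat) < 25 \<Longrightarrow> y < 25 \<Longrightarrow> mop y (mop (mop y (mop x x)) y) = x"
  by (drule cases25) (elim disjE; simp add: law1_row0 law1_row1 law1_row1s law1_row2 law1_row3 law1_row4 law1_row5 law1_row6 law1_row7 law1_row8 law1_row9 law1_row10 law1_row11 law1_row12 law1_row13 law1_row14 law1_row15 law1_row16 law1_row17 law1_row18 law1_row19 law1_row20 law1_row21 law1_row22 law1_row23 law1_row24)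

lemma law1_mop: "law1 {0..<25} mop"
  unfolding law1_def using law1_all by (metis atLeastLessThan_iff)

lemma not_law2_mop: "\<not> law2 {0..<25} mop"
proof
  have h: "mop (mop 0 0) (mop (mop 0 0) 0) \<noteq> 0"
    by (simp add: mop_tab)
  assume "law2 {0..<25} mop"
  hence "\<forall>x\<in>{0..<25::nat}. x = mop (mop x x) (mop (mop x x) x)" by (simp only: law2_def)
  hence "(0::nat) = mop (mop 0 0) (mop (mop 0 0) 0)" by (rule bspec) simp
  with h show False by simp
qed

theorem mainTheorem4:
  shows "\<exists>(M :: nat set) op. finite M \<and> magma M op \<and> law1 M op \<and> \<not> law2 M op"
proof (intro exI conjI)
  show "finite {0..<(25::nat)}" by simp
  show "magma {0..<25} mop" unfolding magma_def using mop_lt by simp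
  show "law1 {0..<25} mop" by (rule law1_mop)
  show "\<not> law2 {0..<25} mop" by (rule not_law2_mop)
qed

end
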